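(* Let $s\ge1$, $r_1,\dots,r_s$ positive integers and $n_1,\dots,n_s$ real numbers with $0\le n_1<n_2<\cdots<n_{s-1}\le n_s-1$, and put $f(x)=(x-n_1)^{r_1}(x-n_2)^{r_2}\cdots(x-n_s)^{r_s}\in\mathbb R[x]$. For a nonconstant polynomial $p$ let $\rho(p)$ denote the maximum modulus of its complex roots. Then: (1) $f(x)-1$ has a unique real root $x_0$ in the interval $(n_s,n_s+1]$, and $\rho(f(x)-1)=x_0$. (2) If $0\le m\le n_s-1$, then $\rho((x-m)f(x)-1)<\rho(f(x)-1)$. (3) $\rho((x-n_s)f(x)-1)\ge\rho(f(x)-1)$, with equality if and only if $s=1$. *)

theory Defs
  imports "HOL-Computational_Algebra.Polynomial" Complex_Main
begin

definition root_radius :: "real poly \<Rightarrow> real" where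
  "root_radius p = Max (norm ` {z :: complex. poly (map_poly complex_of_real p) z = 0})"

text \<open>f(x) = prod_{i<s} (x - n_i)^{r_i}, indices shifted to 0..s-1.\<close>
definition fpoly :: "nat \<Rightarrow> (nat \<Rightarrow> nat) \<Rightarrow> (nat \<Rightarrow> real) \<Rightarrow> real poly" where
  "fpoly s r n = (\<Prod>i<s. [:- n i, 1:] ^ r i)"

end

theory Submission imports Defs "HOL-Computational_Algebra.Fundamental_Theorem_Algebra" begin

abbreviation cp :: "real poly \<Rightarrow> complex poly" where "cp \<equiv> map_poly complex_of_real"

lemma cp_add: "cp (p + q) = cp p + cp q"
  by (intro poly_eqI) (simp add: coeff_map_poly)
lemma cp_diff: "cp (p - q) = cp p - cp q"
  by (intro poly_eqI) (simp add: coeff_map_poly)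
lemma cp_mult: "cp (p * q) = cp p * cp q"
  by (induction p) (simp_all add: map_poly_pCons map_poly_smult cp_add)
lemma poly_cp_mult: "poly (cp (p*q)) z = poly (cp p) z * poly (cp q) z"
  by (simp add: cp_mult)
lemma poly_cp_diff: "poly (cp (p-q)) z = poly (cp p) z - poly (cp q) z"
  by (simp add: cp_diff)
lemma poly_cp_lin: "poly (cp [:-a,1:]) z = z - of_real a"
  by (simp add: map_poly_pCons)
lemma poly_cp_power: "poly (cp (p^k)) z = poly (cp p) z ^ k"
  by (induction k) (simp_all add: poly_cp_mult)
lemma poly_cp_prod: "poly (cp (\<Prod>i\<in>A. f i)) z = (\<Prod>i\<in>A. poly (cp (f i)) z)"
  by (induction A rule: infinite_finite_induct) (simp_all add: poly_cp_mult)
lemma poly_cp_real: "poly (cp p) (of_real x) = of_real (poly p x)"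
  by (induction p) (auto simp: map_poly_pCons)
lemma poly_fpoly: "poly (fpoly s r n) x = (\<Prod>i<s. (x - n i) ^ r i)"
  by (simp add: fpoly_def poly_prod)
lemma poly_cp_fpoly: "poly (cp (fpoly s r n)) z = (\<Prod>i<s. (z - of_real (n i)) ^ r i)"
  by (simp add: fpoly_def poly_cp_prod poly_cp_power poly_cp_lin)

lemma rr_finite: "poly (cp p) w \<noteq> 0 \<Longrightarrow> finite {z. poly (cp p) z = 0}"
  by (rule poly_roots_finite) auto

lemma rr_ge: assumes "poly (cp p) w \<noteq> 0" "poly (cp p) z0 = 0"
  shows "norm z0 \<le> root_radius p"
  unfolding root_radius_def using rr_finite[OF assms(1)] assms(2)
  by (intro Max_ge) auto

lemma rr_le: assumes "poly (cp p) w \<noteq> 0" "poly (cp p) z0 = 0"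
  "\<And>z. poly (cp p) z = 0 \<Longrightarrow> norm z \<le> b"
  shows "root_radius p \<le> b"
  unfolding root_radius_def using rr_finite[OF assms(1)] assms(2,3)
  by (subst Max_le_iff) auto

lemma rr_lt: assumes "poly (cp p) w \<noteq> 0" "poly (cp p) z0 = 0"
  "\<And>z. poly (cp p) z = 0 \<Longrightarrow> norm z < b"
  shows "root_radius p < b"
  unfolding root_radius_def using rr_finite[OF assms(1)] assms(2,3)
  by (subst Max_less_iff) auto

lemma chain_le:
  assumes "\<And>i. Suc i < k \<Longrightarrow> n i < (n (Suc i)::real)" "i \<le> j" "j < k"
  shows "n i \<le> n j"
  using assms(2,3)
proof (induction j rule: dec_induct)
  case base then show ?case by simp
next
  case (step j)
  then have "n j < n (Suc j)" using assms(1) by simp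
  with step show ?case by simp
qed

lemma norm_sub_real: "a \<ge> 0 \<Longrightarrow> norm z - a \<le> norm (z - complex_of_real a)"
  using norm_triangle_ineq2[of z "of_real a"] by simp

lemma prod_norm_bound:
  fixes n :: "nat \<Rightarrow> real" and z :: complex
  assumes "\<And>i. i < s \<Longrightarrow> 0 \<le> n i \<and> n i \<le> norm z"
  shows "(\<Prod>i<s. (norm z - n i) ^ r i) \<le> norm (\<Prod>i<s. (z - of_real (n i)) ^ r i)"
proof -
  have "(\<Prod>i<s. (norm z - n i) ^ r i) \<le> (\<Prod>i<s. norm (z - of_real (n i)) ^ r i)"
    by (intro prod_mono conjI power_mono) (use assms norm_sub_real in auto)
  also have "\<dots> = norm (\<Prod>i<s. (z - of_real (n i)) ^ r i)"
    by (subst prod_norm[symmetric]) (simp add: norm_power)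
  finally show ?thesis .
qed


theorem lemma6p1:
  fixes s :: nat and r :: "nat \<Rightarrow> nat" and n :: "nat \<Rightarrow> real"
  assumes s_pos: "s \<ge> 1"
    and r_pos: "\<And>i. i < s \<Longrightarrow> r i > 0"
    and n0: "0 \<le> n 0"
    and n_incr: "\<And>i. Suc i < s - 1 \<Longrightarrow> n i < n (Suc i)"
    and n_gap: "s \<ge> 2 \<Longrightarrow> n (s - 2) \<le> n (s - 1) - 1"
  shows "(\<exists>x0. n (s - 1) < x0 \<and> x0 \<le> n (s - 1) + 1
             \<and> poly (fpoly s r n - 1) x0 = 0
             \<and> (\<forall>y. n (s - 1) < y \<and> y \<le> n (s - 1) + 1 \<and> poly (fpoly s r n - 1) y = 0 \<longrightarrow> y = x0)
             \<and> root_radius (fpoly s r n - 1) = x0)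
       \<and> (\<forall>m::real. 0 \<le> m \<and> m \<le> n (s - 1) - 1 \<longrightarrow>
           root_radius ([:- m, 1:] * fpoly s r n - 1) < root_radius (fpoly s r n - 1))
       \<and> root_radius ([:- n (s - 1), 1:] * fpoly s r n - 1) \<ge> root_radius (fpoly s r n - 1)
       \<and> (root_radius ([:- n (s - 1), 1:] * fpoly s r n - 1) = root_radius (fpoly s r n - 1) \<longleftrightarrow> s = 1)"
proof -
  define N where "N = n (s - 1)"
  define F where "F = fpoly s r n"
  define P where "P = (\<lambda>x::real. \<Prod>i<s. (x - n i) ^ r i)"
  define Q where "Q = (\<lambda>x::real. \<Prod>i<s-1. (x - n i) ^ r i)"
  define R where "R = r (s - 1)"
  have R_pos: "R > 0" unfolding R_def using r_pos s_pos by simp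
  have polyF: "\<And>x. poly F x = P x" unfolding F_def P_def by (simp add: poly_fpoly)
  have cpolyF: "\<And>z. poly (cp F) z = (\<Prod>i<s. (z - of_real (n i)) ^ r i)"
    unfolding F_def by (simp add: poly_cp_fpoly)
  have lowN: "\<And>i. i < s - 1 \<Longrightarrow> 0 \<le> n i \<and> n i \<le> N - 1"
  proof -
    fix i assume i: "i < s - 1"
    have "n 0 \<le> n i" by (rule chain_le[of "s - 1"]) (use n_incr i in auto)
    moreover have "n i \<le> n (s - 2)" by (rule chain_le[of "s - 1"]) (use n_incr i in auto)
    moreover have "n (s - 2) \<le> N - 1" using n_gap i unfolding N_def by simp
    ultimately show "0 \<le> n i \<and> n i \<le> N - 1" using n0 by simp
  qed
  have N0: "0 \<le> N"
  proof (cases "s = 1")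
    case True then show ?thesis using n0 unfolding N_def by simp
  next
    case False then have "0 < s - 1" using s_pos by simp
    then show ?thesis using lowN[of 0] by simp
  qed
  have allN: "\<And>i. i < s \<Longrightarrow> 0 \<le> n i \<and> n i \<le> N"
  proof -
    fix i assume "i < s"
    then consider "i < s - 1" | "i = s - 1" by linarith
    then show "0 \<le> n i \<and> n i \<le> N" using lowN N0 unfolding N_def by cases force+
  qed
  have Psplit: "\<And>x. P x = (x - N) ^ R * Q x"
  proof -
    fix x
    have "{..<s} = insert (s - 1) {..<s-1}" using s_pos by auto
    then show "P x = (x - N) ^ R * Q x"
      unfolding P_def Q_def N_def R_def by simp
  qed
  have Qge1: "\<And>x. N \<le> x \<Longrightarrow> 1 \<le> Q x"
    unfolding Q_def by (intro prod_ge_1 one_le_power) (use lowN in force)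
  have Qmono: "\<And>x y. N \<le> x \<Longrightarrow> x \<le> y \<Longrightarrow> Q x \<le> Q y"
    unfolding Q_def by (intro prod_mono conjI power_mono zero_le_power) (use lowN in force)+
  have Pmono: "\<And>x y. N \<le> x \<Longrightarrow> x \<le> y \<Longrightarrow> P x \<le> P y"
  proof -
    fix x y :: real assume xy: "N \<le> x" "x \<le> y"
    have "0 \<le> Q x" using Qge1[of x] xy by linarith
    then show "P x \<le> P y" unfolding Psplit using Qmono[OF xy] xy
      by (intro mult_mono power_mono) auto
  qed
  have Pstrict: "\<And>x y. N \<le> x \<Longrightarrow> x < y \<Longrightarrow> P x < P y"
  proof -
    fix x y assume xy: "N \<le> x" "x < y"
    have "(x - N) ^ R * Q x \<le> (x - N) ^ R * Q y"
      using Qmono[of x y] xy by (intro mult_left_mono) auto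
    also have "\<dots> < (y - N) ^ R * Q y"
      using Qge1[of y] xy R_pos by (intro mult_strict_right_mono power_strict_mono) auto
    finally show "P x < P y" unfolding Psplit .
  qed
  have PN: "P N = 0" unfolding Psplit using R_pos by simp
  have PN1: "1 \<le> P (N + 1)" unfolding Psplit using Qge1[of "N+1"] by simp
  have normP: "\<And>z. N \<le> norm z \<Longrightarrow> P (norm z) \<le> norm (poly (cp F) z)"
    unfolding cpolyF P_def by (rule prod_norm_bound) (use allN in force)
  have cpF1: "\<And>z. poly (cp (F - 1)) z = poly (cp F) z - 1"
    by (simp add: poly_cp_diff)
  have cpFreal: "\<And>x. poly (cp F) (of_real x) = of_real (P x)"
    by (simp add: poly_cp_real polyF)
  obtain x0 where x0: "N \<le> x0" "x0 \<le> N + 1" "P x0 = 1"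
    using IVT[of "poly F" N 1 "N + 1"] PN PN1 by (auto simp: polyF)
  have x0N: "N < x0" using x0 PN by (cases "x0 = N") auto
  have uniq: "\<And>y. N < y \<Longrightarrow> P y = 1 \<Longrightarrow> y = x0"
  proof -
    fix y assume y: "N < y" "P y = 1"
    show "y = x0"
    proof (rule ccontr)
      assume "y \<noteq> x0"
      then consider "y < x0" | "x0 < y" by linarith
      then show False
      proof cases
        case 1 then show False using Pstrict[of y x0] y x0 by simp
      next
        case 2 then show False using Pstrict[of x0 y] y x0 by simp
      qed
    qed
  qed
  have w1: "poly (cp (F - 1)) (of_real N) \<noteq> 0" by (simp add: cpF1 cpFreal PN)
  have rootx0: "poly (cp (F - 1)) (of_real x0) = 0" by (simp add: cpF1 cpFreal x0)
  have rad1: "root_radius (F - 1) = x0"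
  proof (rule antisym)
    show "root_radius (F - 1) \<le> x0"
    proof (rule rr_le[OF w1 rootx0])
      fix z assume z: "poly (cp (F - 1)) z = 0"
      show "norm z \<le> x0"
      proof (rule ccontr)
        assume "\<not> norm z \<le> x0"
        then have "1 < P (norm z)" using Pstrict[of x0 "norm z"] x0 x0N by simp
        also have "\<dots> \<le> norm (poly (cp F) z)" using normP[of z] \<open>\<not> norm z \<le> x0\<close> x0N by simp
        finally show False using z by (simp add: cpF1)
      qed
    qed
    show "x0 \<le> root_radius (F - 1)" using rr_ge[OF w1 rootx0] x0N N0 by simp
  qed
  have part1: "\<exists>x0. N < x0 \<and> x0 \<le> N + 1 \<and> poly (F - 1) x0 = 0
             \<and> (\<forall>y. N < y \<and> y \<le> N + 1 \<and> poly (F - 1) y = 0 \<longrightarrow> y = x0)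
             \<and> root_radius (F - 1) = x0"
  proof (intro exI[of _ x0] conjI allI impI)
    show "poly (F - 1) x0 = 0" using x0 by (simp add: polyF)
    fix y assume "N < y \<and> y \<le> N + 1 \<and> poly (F - 1) y = 0"
    then show "y = x0" using uniq by (simp add: polyF)
  qed (use x0 x0N rad1 in auto)
  have part2: "\<forall>m::real. 0 \<le> m \<and> m \<le> N - 1 \<longrightarrow> root_radius ([:-m,1:]*F - 1) < root_radius (F - 1)"
  proof (intro allI impI)
    fix m :: real assume m: "0 \<le> m \<and> m \<le> N - 1"
    define G where "G = [:-m,1:]*F - 1"
    have cG: "\<And>z. poly (cp G) z = (z - of_real m) * poly (cp F) z - 1"
      unfolding G_def poly_cp_diff poly_cp_mult poly_cp_lin by simp
    have wG: "poly (cp G) (of_real m) \<noteq> 0" by (simp add: cG)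
    have "x0 \<noteq> m" using m x0N by simp
    then have "poly (cp G) (of_real x0) \<noteq> poly (cp G) (of_real m)"
      by (simp add: cG cpFreal x0)
    then have "\<not> constant (poly (cp G))" unfolding constant_def by blast
    then obtain z0 where z0: "poly (cp G) z0 = 0" using fundamental_theorem_of_algebra by blast
    have "root_radius G < x0"
    proof (rule rr_lt[OF wG z0])
      fix z assume z: "poly (cp G) z = 0"
      show "norm z < x0"
      proof (rule ccontr)
        assume "\<not> norm z < x0" then have nz: "x0 \<le> norm z" by simp
        have Pz: "1 \<le> P (norm z)" using Pmono[of x0 "norm z"] nz x0 by simp
        have "1 < (x0 - m) * 1" using m x0N by simp
        also have "\<dots> \<le> (norm z - m) * P (norm z)"
          using nz Pz m x0N by (intro mult_mono) auto
        also have "\<dots> \<le> norm (z - of_real m) * norm (poly (cp F) z)"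
          using norm_sub_real[of m z] normP[of z] nz x0N m Pz by (intro mult_mono) auto
        also have "\<dots> = norm ((z - of_real m) * poly (cp F) z)" by (simp add: norm_mult)
        also have "(z - of_real m) * poly (cp F) z = 1" using z by (simp add: cG)
        finally show False by simp
      qed
    qed
    then show "root_radius G < root_radius (F - 1)" using rad1 by simp
  qed
  define H where "H = [:-N,1:]*F - 1"
  have pH: "\<And>y. poly H y = (y - N) * P y - 1" unfolding H_def by (simp add: polyF algebra_simps)
  have cH: "\<And>z. poly (cp H) z = (z - of_real N) * poly (cp F) z - 1"
    unfolding H_def poly_cp_diff poly_cp_mult poly_cp_lin by simp
  have h1: "poly H x0 \<le> 0" using x0 by (simp add: pH)
  have h2: "0 \<le> poly H (N + 1)" using PN1 by (simp add: pH)
  have h3: "x0 \<le> N + 1" using x0 by simp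
  obtain y0 where y0: "x0 \<le> y0" "y0 \<le> N + 1" "poly H y0 = 0"
    using IVT[of "poly H" x0 0 "N + 1", OF h1 h2 h3] by auto
  have wH: "poly (cp H) (of_real N) \<noteq> 0" by (simp add: cH)
  have rootY: "poly (cp H) (of_real y0) = 0" by (simp add: poly_cp_real y0)
  have radH: "y0 \<le> root_radius H" using rr_ge[OF wH rootY] y0 x0N N0 by simp
  have part3a: "root_radius (F - 1) \<le> root_radius H" using radH y0 rad1 by simp
  have part3b: "root_radius H = root_radius (F - 1) \<longleftrightarrow> s = 1"
  proof
    assume eq: "root_radius H = root_radius (F - 1)"
    show "s = 1"
    proof (rule ccontr)
      assume "s \<noteq> 1" then have s2: "0 < s - 1" using s_pos by simp
      have f0: "2 \<le> (N + 1 - n 0) ^ r 0"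
      proof -
        have "2 \<le> N + 1 - n 0" using lowN[OF s2] by simp
        also have "\<dots> = (N + 1 - n 0) ^ 1" by simp
        also have "\<dots> \<le> (N + 1 - n 0) ^ r 0"
          using r_pos[of 0] s2 lowN[OF s2] by (intro power_increasing) auto
        finally show ?thesis .
      qed
      have "Q (N + 1) = (N + 1 - n 0) ^ r 0 * (\<Prod>i\<in>{..<s-1} - {0}. (N + 1 - n i) ^ r i)"
        unfolding Q_def using s2 by (subst prod.remove[of _ 0]) auto
      also have "\<dots> \<ge> (N + 1 - n 0) ^ r 0 * 1"
        using f0 by (intro mult_left_mono prod_ge_1 one_le_power) (use lowN in force)+
      finally have "2 \<le> Q (N + 1)" using f0 by simp
      then have PN1': "1 < P (N + 1)" unfolding Psplit by simp
      then have "x0 \<noteq> N + 1" using x0 by auto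
      then have "poly H x0 < 0" using x0 by (simp add: pH)
      then have "y0 \<noteq> x0" using y0 by auto
      then have "x0 < root_radius H" using radH y0 by simp
      then show False using eq rad1 by simp
    qed
  next
    assume s1: "s = 1"
    have N1: "N = n 0" using s1 unfolding N_def by simp
    have P1: "\<And>x. P x = (x - N) ^ r 0" unfolding P_def N1 s1 by simp
    have R1: "R = r 0" unfolding R_def s1 by simp
    have "(x0 - N) ^ r 0 = 1 ^ r 0" using x0 P1 by simp
    moreover have "0 \<le> x0 - N" using x0N by simp
    moreover have "0 < r 0" using R_pos R1 by simp
    ultimately have x0eq: "x0 - N = 1"
      using power_eq_imp_eq_base[of "x0 - N" "r 0" 1] by simp
    have "root_radius H \<le> x0"
    proof (rule rr_le[OF wH rootY])
      fix z assume z: "poly (cp H) z = 0"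
      have "poly (cp F) z = (z - of_real N) ^ r 0"
        unfolding cpolyF s1 N1 by simp
      then have "(z - of_real N) * (z - of_real N) ^ r 0 = 1"
        using z unfolding cH by simp
      then have "(z - of_real N) ^ Suc (r 0) = 1" by (simp only: power_Suc)
      then have "norm ((z - of_real N) ^ Suc (r 0)) = 1" by simp
      then have "norm (z - of_real N) ^ Suc (r 0) = 1 ^ Suc (r 0)" by (simp only: norm_power power_one)
      then have "norm (z - of_real N) = 1"
        using power_eq_imp_eq_base[of "norm (z - of_real N)" "Suc (r 0)" 1] by simp
      moreover have "norm z \<le> norm (z - of_real N) + norm (of_real N :: complex)"
        using norm_triangle_ineq[of "z - of_real N" "of_real N"] by simp
      ultimately show "norm z \<le> x0" using x0eq N0 by simp
    qed
    then show "root_radius H = root_radius (F - 1)" using part3a rad1 by simp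
  qed
  show ?thesis
    unfolding N_def[symmetric] F_def[symmetric] H_def[symmetric]
    using part1 part2 part3a part3b by (simp only:)
qed
end
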